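(* Assume the standing assumptions below. Let $\mathcal P$ be a (random) collection of pairwise disjoint subsets $\mathcal R\subseteq\mathbb{R}^d$ with $\bigsqcup_{\mathcal R\in\mathcal P}\mathcal R=\hat C^{\mathrm{gwc}}(X^{n+1})$ almost surely. For each $\mathcal R\in\mathcal P$ let $\hat C^{\mathrm{lwc}}(X^{n+1};\mathcal R)\subseteq\mathbb{R}^d$ be a (random) set such that, almost surely, $\hat C^{\mathrm{lwc}}(X^{n+1};\mathcal R)\subseteq\mathcal R$, and, on the event $Y^{n+1}\in\mathcal R$, $\hat C^{\mathrm{lwc}}(X^{n+1};\mathcal R)\supseteq\tilde C(X^{n+1})\cap\mathcal R$. Let $\mathcal U:=\bigsqcup_{\mathcal R\in\mathcal P}\hat C^{\mathrm{lwc}}(X^{n+1};\mathcal R)$. Then $\mathcal U\subseteq\hat C^{\mathrm{gwc}}(X^{n+1})$ almost surely and $\mathbb{P}[Y^{n+1}\in\mathcal U]\ge1-\alpha$. Consequently any (random) set $\hat C^{\mathrm{lwc}}(X^{n+1})$ with $\mathcal U\subseteq\hat C^{\mathrm{lwc}}(X^{n+1})\subseteq \hat C^{\mathrm{gwc}}(X^{n+1})$ a.s. (e.g. a rectangular enclosure of $\mathcal U$ not extending beyond $\hat C^{\mathrm{gwc}}(X^{n+1})$) satisfies $\mathbb{P}[Y^{n+1}\in\hat C^{\mathrm{lwc}}(X^{n+1})]\ge1-\alpha$.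
   Context: Setting: $n\ge2$, $d\ge1$, $\alpha\in(0,1)$. $(X^i,Y^i)$, $i\in[n+1]$, random with $X^i\in\mathcal X$, $Y^i\in\mathbb{R}^d$; $E:\mathcal X\times\mathbb{R}^d\to\mathbb{R}^d$ a fixed residual function, $E^i:=E(X^i,Y^i)$; $(E^1,\dots,E^{n+1})$ exchangeable. Assumption A: for each $j$, the distribution of $E^i_j$ has no point masses, $E^i_j\ge0$ a.s., finite mean, $0<\mathrm{Var}(E^i_j)<\infty$, and $E^1_j,\dots,E^{n+1}_j$ a.s. pairwise distinct. $\hat Q_{1-\alpha}(x_1,\dots,x_n)$: the $\lceil(1-\alpha)(n+1)\rceil$-th smallest value of $\{x_1,\dots,x_n,+\infty\}$. $\hat\mu_j=\frac1n\sum_{i=1}^nE^i_j$, $\hat\sigma_j=\sqrt{\frac1n\sum_{i=1}^n(E^i_j-\hat\mu_j)^2}$; for $z\ge0$, $\hat\mu_j(z)=\frac{\sum_{i=1}^nE^i_j+z}{n+1}$, $\hat\sigma_j(z)=\sqrt{\frac{\sum_{i=1}^n(E^i_j-\hat\mu_j(z))^2+(z-\hat\mu_j(z))^2}{n}}$. Link functions: $\omega_j(c)=0$ if $c\le-\frac n{\sqrt{n+1}}$; $\max\{0,\hat\mu_j-\hat\sigma_j|c|\sqrt{\tfrac{(n+1)^2}{n^2-(n+1)c^2}}\}$ if $-\frac n{\sqrt{n+1}}<c<0$; $\hat\mu_j+\hat\sigma_j|c|\sqrt{\tfrac{(n+1)^2}{n^2-(n+1)c^2}}$ if $0\le c<\frac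 n{\sqrt{n+1}}$; $+\infty$ if $c\ge\frac n{\sqrt{n+1}}$. Oracle: $\hat\mu^{\mathrm{oracle}}_j=\hat\mu_j(E^{n+1}_j)$, $\hat\sigma^{\mathrm{oracle}}_j=\hat\sigma_j(E^{n+1}_j)$, $\Phi(t;\mu,\sigma)=\max_j\frac{t_j-\mu_j}{\sigma_j}$, $S^i_{\mathrm{oracle}}=\Phi(E^i;\hat\mu^{\mathrm{oracle}},\hat\sigma^{\mathrm{oracle}})$, $\hat Q^{\mathrm{oracle}}_{1-\alpha}=\hat Q_{1-\alpha}(S^1_{\mathrm{oracle}},\dots,S^n_{\mathrm{oracle}})$, and $\tilde C(X^{n+1}):=\{y:0\le E_j(X^{n+1},y)\le\omega_j(\hat Q^{\mathrm{oracle}}_{1-\alpha})\ \forall j\}$ (a random set depending on the unobserved $Y^{n+1}$). GWC: $\hat\Phi^{\mathrm{gwc}}(t)=\max_j\sup_{z_j\ge0}\frac{t_j-\hat\mu_j(z_j)}{\hat\sigma_j(z_j)}$, $\hat Q^{\mathrm{gwc}}_{1-\alpha}=\hat Q_{1-\alpha}(\hat\Phi^{\mathrm{gwc}}(E^1),\dots,\hat\Phi^{\mathrm{gwc}}(E^n))$, $\hat C^{\mathrm{gwc}}(X^{n+1})=\{y:0\le E_j(X^{n+1},y)\le\omega_j(\hat Q^{\mathrm{gwc}}_{1-\alpha})\ \forall j\}$. *)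

theory Defs
  imports "HOL-Probability.Probability"
begin

text \<open>Vectors in R^d are rendered as real^'d (finite index type 'd, so d >= 1).
Sample indices are the naturals 1..n+1; index n+1 is the test point.
A sample of residuals is a map e :: nat => real^'d (only e 1 .. e (n+1) matter).\<close>

definition Qhat :: "real \<Rightarrow> nat \<Rightarrow> (nat \<Rightarrow> ereal) \<Rightarrow> ereal" where
  "Qhat \<alpha> n s =
     sort (map s [1..<n+1] @ [\<infinity>]) ! (nat \<lceil>(1 - \<alpha>) * real (n + 1)\<rceil> - 1)"

definition mu_hat :: "nat \<Rightarrow> (nat \<Rightarrow> real^'d) \<Rightarrow> 'd \<Rightarrow> real" where
  "mu_hat n e j = (\<Sum>i=1..n. e i $ j) / real n"

definition sigma_hat :: "nat \<Rightarrow> (nat \<Rightarrow> real^'d) \<Rightarrow> 'd \<Rightarrow> real" where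
  "sigma_hat n e j = sqrt ((\<Sum>i=1..n. (e i $ j - mu_hat n e j)^2) / real n)"

definition mu_z :: "nat \<Rightarrow> (nat \<Rightarrow> real^'d) \<Rightarrow> 'd \<Rightarrow> real \<Rightarrow> real" where
  "mu_z n e j z = ((\<Sum>i=1..n. e i $ j) + z) / real (n + 1)"

definition sigma_z :: "nat \<Rightarrow> (nat \<Rightarrow> real^'d) \<Rightarrow> 'd \<Rightarrow> real \<Rightarrow> real" where
  "sigma_z n e j z = sqrt (((\<Sum>i=1..n. (e i $ j - mu_z n e j z)^2) + (z - mu_z n e j z)^2) / real n)"

definition omega :: "nat \<Rightarrow> (nat \<Rightarrow> real^'d) \<Rightarrow> 'd \<Rightarrow> ereal \<Rightarrow> ereal" where
  "omega n e j c =
     (let b = real n / sqrt (real n + 1) in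
      if c \<le> ereal (- b) then 0
      else if c \<ge> ereal b then \<infinity>
      else (let r = real_of_ereal c;
                w = sigma_hat n e j * \<bar>r\<bar> *
                    sqrt ((real n + 1)^2 / ((real n)^2 - (real n + 1) * r^2))
            in if r < 0 then ereal (max 0 (mu_hat n e j - w))
               else ereal (mu_hat n e j + w)))"

definition region :: "('x \<Rightarrow> real^'d \<Rightarrow> real^'d) \<Rightarrow> 'x \<Rightarrow> nat \<Rightarrow> (nat \<Rightarrow> real^'d)
    \<Rightarrow> ereal \<Rightarrow> (real^'d) set" where
  "region E x n e q = {y. \<forall>j. 0 \<le> E x y $ j \<and> ereal (E x y $ j) \<le> omega n e j q}"

definition S_oracle :: "nat \<Rightarrow> (nat \<Rightarrow> real^'d) \<Rightarrow> real^'d \<Rightarrow> real" where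
  "S_oracle n e t = Max (range (\<lambda>j. (t $ j - mu_z n e j (e (n+1) $ j)) / sigma_z n e j (e (n+1) $ j)))"

definition Q_oracle :: "real \<Rightarrow> nat \<Rightarrow> (nat \<Rightarrow> real^'d) \<Rightarrow> ereal" where
  "Q_oracle \<alpha> n e = Qhat \<alpha> n (\<lambda>i. ereal (S_oracle n e (e i)))"

definition Phi_gwc :: "nat \<Rightarrow> (nat \<Rightarrow> real^'d) \<Rightarrow> real^'d \<Rightarrow> ereal" where
  "Phi_gwc n e t = (SUP j. SUP z\<in>{0::real..}. ereal ((t $ j - mu_z n e j z) / sigma_z n e j z))"

definition Q_gwc :: "real \<Rightarrow> nat \<Rightarrow> (nat \<Rightarrow> real^'d) \<Rightarrow> ereal" where
  "Q_gwc \<alpha> n e = Qhat \<alpha> n (\<lambda>i. Phi_gwc n e (e i))"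

definition resid :: "('x \<Rightarrow> real^'d \<Rightarrow> real^'d) \<Rightarrow> (nat \<Rightarrow> 'w \<Rightarrow> 'x) \<Rightarrow> (nat \<Rightarrow> 'w \<Rightarrow> real^'d)
    \<Rightarrow> nat \<Rightarrow> 'w \<Rightarrow> real^'d" where
  "resid E X Y i \<omega> = E (X i \<omega>) (Y i \<omega>)"

definition C_tilde :: "real \<Rightarrow> nat \<Rightarrow> ('x \<Rightarrow> real^'d \<Rightarrow> real^'d) \<Rightarrow> (nat \<Rightarrow> 'w \<Rightarrow> 'x)
    \<Rightarrow> (nat \<Rightarrow> 'w \<Rightarrow> real^'d) \<Rightarrow> 'w \<Rightarrow> (real^'d) set" where
  "C_tilde \<alpha> n E X Y \<omega> =
     region E (X (n+1) \<omega>) n (\<lambda>i. resid E X Y i \<omega>) (Q_oracle \<alpha> n (\<lambda>i. resid E X Y i \<omega>))"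

definition C_gwc :: "real \<Rightarrow> nat \<Rightarrow> ('x \<Rightarrow> real^'d \<Rightarrow> real^'d) \<Rightarrow> (nat \<Rightarrow> 'w \<Rightarrow> 'x)
    \<Rightarrow> (nat \<Rightarrow> 'w \<Rightarrow> real^'d) \<Rightarrow> 'w \<Rightarrow> (real^'d) set" where
  "C_gwc \<alpha> n E X Y \<omega> =
     region E (X (n+1) \<omega>) n (\<lambda>i. resid E X Y i \<omega>) (Q_gwc \<alpha> n (\<lambda>i. resid E X Y i \<omega>))"

definition exchangeable :: "'w measure \<Rightarrow> nat \<Rightarrow> (nat \<Rightarrow> 'w \<Rightarrow> 'v::topological_space) \<Rightarrow> bool" where
  "exchangeable M m V \<longleftrightarrow>
     (\<forall>\<pi>. \<pi> permutes {1..m} \<longrightarrow>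
        distr M (PiM {1..m} (\<lambda>_. borel)) (\<lambda>\<omega>. \<lambda>i\<in>{1..m}. V (\<pi> i) \<omega>) =
        distr M (PiM {1..m} (\<lambda>_. borel)) (\<lambda>\<omega>. \<lambda>i\<in>{1..m}. V i \<omega>))"

definition assumption_A :: "'w measure \<Rightarrow> nat \<Rightarrow> (nat \<Rightarrow> 'w \<Rightarrow> real^'d) \<Rightarrow> bool" where
  "assumption_A M n V \<longleftrightarrow>
     (\<forall>j. \<forall>i\<in>{1..n+1}.
        (\<forall>c. measure M {\<omega>\<in>space M. V i \<omega> $ j = c} = 0) \<and>
        (AE \<omega> in M. V i \<omega> $ j \<ge> 0) \<and>
        integrable M (\<lambda>\<omega>. V i \<omega> $ j) \<and>
        integrable M (\<lambda>\<omega>. (V i \<omega> $ j)^2) \<and>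
        prob_space.variance M (\<lambda>\<omega>. V i \<omega> $ j) > 0) \<and>
     (\<forall>j. AE \<omega> in M. \<forall>i\<in>{1..n+1}. \<forall>k\<in>{1..n+1}. i \<noteq> k \<longrightarrow> V i \<omega> $ j \<noteq> V k \<omega> $ j)"

end

theory Submission
  imports Defs
begin


definition om :: "nat \<Rightarrow> real \<Rightarrow> real \<Rightarrow> ereal \<Rightarrow> ereal" where
  "om n mu s c =
     (let b = real n / sqrt (real n + 1) in
      if c \<le> ereal (- b) then 0
      else if c \<ge> ereal b then \<infinity>
      else (let r = real_of_ereal c;
                w = s * \<bar>r\<bar> *
                    sqrt ((real n + 1)^2 / ((real n)^2 - (real n + 1) * r^2))
            in if r < 0 then ereal (max 0 (mu - w))
               else ereal (mu + w)))"

lemma omega_om: "omega n e j c = om n (mu_hat n e j) (sigma_hat n e j) c"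
  unfolding omega_def om_def by simp

lemma c_bound:
  fixes n :: nat and s u :: real
  assumes "n \<ge> 1" "s > 0"
  shows "\<bar>(real n * u / (real n + 1)) / sqrt (s^2 + u^2/(real n + 1))\<bar> < real n / sqrt (real n + 1)"
proof -
  have n1: "real n + 1 > 0" by simp
  have "sqrt (u^2/(real n + 1)) < sqrt (s^2 + u^2/(real n + 1))"
    using assms by (intro real_sqrt_less_mono) auto
  moreover have "sqrt (u^2/(real n + 1)) = \<bar>u\<bar> / sqrt (real n + 1)"
    by (simp add: real_sqrt_divide)
  ultimately have lt: "\<bar>u\<bar> / sqrt (real n + 1) < sqrt (s^2 + u^2/(real n + 1))" by simp
  have sp: "sqrt (s^2 + u^2/(real n + 1)) > 0" using assms by (intro real_sqrt_gt_zero) (simp add: add_pos_nonneg)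
  have sq: "sqrt (real n + 1) * sqrt (real n + 1) = real n + 1" by simp
  have sq1: "sqrt (real n + 1) > 0" by simp
  have "\<bar>(real n * u / (real n + 1)) / sqrt (s^2 + u^2/(real n + 1))\<bar>
        = (real n * \<bar>u\<bar> / (real n + 1)) / sqrt (s^2 + u^2/(real n + 1))"
    using sp by (simp add: abs_mult abs_divide)
  also have "\<dots> < real n / sqrt (real n + 1)"
  proof -
    have "real n * \<bar>u\<bar> / (real n + 1) = real n / sqrt (real n + 1) * (\<bar>u\<bar> / sqrt (real n + 1))"
      using sq sq1 by (simp add: field_simps)
    also have "\<dots> < real n / sqrt (real n + 1) * sqrt (s^2 + u^2/(real n + 1))"
      using lt assms by (intro mult_strict_left_mono) auto
    finally show ?thesis using sp by (simp add: divide_less_eq mult_ac)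
  qed
  finally show ?thesis .
qed

lemma om_le:
  fixes n :: nat and s u mu :: real and q :: ereal
  assumes n: "n \<ge> 1" and s: "s > 0"
    and cq: "ereal ((real n * u / (real n + 1)) / sqrt (s^2 + u^2/(real n + 1))) \<le> q"
  shows "ereal (mu + u) \<le> om n mu s q"
proof -
  define b where "b = real n / sqrt (real n + 1)"
  define D where "D = s^2 + u^2/(real n + 1)"
  define c where "c = (real n * u / (real n + 1)) / sqrt D"
  have Dp: "D > 0" unfolding D_def using s by (simp add: add_pos_nonneg)
  have cb: "\<bar>c\<bar> < b" unfolding c_def D_def b_def using c_bound[OF n s] .
  have cq': "ereal c \<le> q" using cq unfolding c_def D_def .
  have c2: "c^2 = (real n)^2 * u^2 / ((real n + 1)^2 * D)"
    unfolding c_def using Dp by (simp add: power_divide power_mult_distrib)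
  have b2: "b^2 = (real n)^2 / (real n + 1)" unfolding b_def by (simp add: power_divide)
  show ?thesis
  proof (cases "q \<le> ereal (- b)")
    case True
    then have "c \<le> - b" using cq' by (metis ereal_less_eq(3) order_trans)
    then show ?thesis using cb by linarith
  next
    case F1: False
    show ?thesis
    proof (cases "q \<ge> ereal b")
      case True
      then show ?thesis using F1 unfolding om_def b_def[symmetric] by simp
    next
      case F2: False
      then obtain r where qr: "q = ereal r" using F1 by (cases q) auto
      have rb: "- b < r" "r < b" using F1 F2 qr by auto
      have "r^2 < b^2" using rb by (smt (verit) abs_less_iff abs_square_less_1 power2_abs real_sqrt_abs real_sqrt_less_iff)
      then have pos: "(real n)^2 - (real n + 1) * r^2 > 0" unfolding b2 by (simp add: field_simps)
      define w where "w = s * \<bar>r\<bar> * sqrt ((real n + 1)^2 / ((real n)^2 - (real n + 1) * r^2))"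
      have w0: "w \<ge> 0" unfolding w_def using s pos by simp
      have w2: "w^2 = s^2 * r^2 * (real n + 1)^2 / ((real n)^2 - (real n + 1) * r^2)"
        unfolding w_def using pos by (simp add: power_mult_distrib power2_abs)
      have cr: "c \<le> r" using cq' qr by simp
      have omq: "om n mu s q = (if r < 0 then ereal (max 0 (mu - w)) else ereal (mu + w))"
        unfolding om_def b_def[symmetric] w_def using F1 F2 qr by (simp add: Let_def)
      have sgn: "(c > 0 \<longleftrightarrow> u > 0) \<and> (c < 0 \<longleftrightarrow> u < 0)"
        unfolding c_def using Dp n by (auto simp: divide_pos_pos zero_less_divide_iff divide_less_0_iff zero_less_mult_iff mult_less_0_iff)
      have key: "c^2 * ((real n + 1)^2 * D) = (real n)^2 * u^2" using c2 Dp by (simp add: field_simps)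
      have Dexp: "(real n + 1)^2 * D = (real n + 1)^2 * s^2 + (real n + 1) * u^2"
        unfolding D_def by (simp add: field_simps power2_eq_square)
      have rD: "r^2 * ((real n + 1)^2 * D) = r^2 * ((real n + 1)^2 * s^2) + r^2 * (real n + 1) * u^2"
        unfolding Dexp by (simp add: distrib_left mult.assoc)
      show ?thesis
      proof (cases "r < 0")
        case True
        then have "c < 0" using cr by linarith
        then have u0: "u < 0" using sgn by blast
        have "(-r)^2 \<le> (-c)^2" using cr True by (intro power_mono) auto
        then have "r^2 \<le> c^2" by simp
        then have "r^2 * ((real n + 1)^2 * D) \<le> c^2 * ((real n + 1)^2 * D)"
          using Dp by (intro mult_right_mono) auto
        then have "r^2 * ((real n + 1)^2 * s^2) + r^2 * (real n + 1) * u^2 \<le> (real n)^2 * u^2"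
          using key rD by linarith
        then have "s^2 * r^2 * (real n + 1)^2 \<le> u^2 * ((real n)^2 - (real n + 1) * r^2)"
          by (simp add: algebra_simps)
        then have "w^2 \<le> u^2" unfolding w2 using pos by (simp add: divide_le_eq mult_ac)
        then have "w \<le> - u" using w0 u0 by (metis abs_le_square_iff abs_of_nonneg abs_of_neg)
        then have "mu + u \<le> max 0 (mu - w)" by simp
        then show ?thesis unfolding omq using True by (simp only: if_True ereal_less_eq(3))
      next
        case False
        show ?thesis
        proof (cases "u \<le> 0")
          case True then show ?thesis unfolding omq using False w0 by simp
        next
          case u0: False
          then have "c > 0" using sgn by auto
          then have "c^2 \<le> r^2" using cr by (intro power_mono) auto
          then have "c^2 * ((real n + 1)^2 * D) \<le> r^2 * ((real n + 1)^2 * D)"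
            using Dp by (intro mult_right_mono) auto
          then have "(real n)^2 * u^2 \<le> r^2 * ((real n + 1)^2 * s^2) + r^2 * (real n + 1) * u^2"
            using key rD by linarith
          then have "u^2 * ((real n)^2 - (real n + 1) * r^2) \<le> s^2 * r^2 * (real n + 1)^2"
            by (simp add: algebra_simps)
          then have "u^2 \<le> w^2" unfolding w2 using pos by (simp add: le_divide_eq mult_ac)
          then have "u \<le> w" using w0 u0 by (metis abs_le_square_iff abs_of_nonneg not_le less_imp_le)
          then show ?thesis unfolding omq using False by simp
        qed
      qed
    qed
  qed
qed

lemma sumsq_shift:
  fixes a :: "nat \<Rightarrow> real"
  assumes "finite I" "card I > 0"
  shows "(\<Sum>i\<in>I. (a i - m)^2) = (\<Sum>i\<in>I. (a i - sum a I / card I)^2) + card I * (sum a I / card I - m)^2"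
proof -
  define mu where "mu = sum a I / card I"
  have s0: "(\<Sum>i\<in>I. (a i - mu)) = 0" unfolding mu_def using assms by (simp add: sum_subtractf)
  have "(\<Sum>i\<in>I. (a i - m)^2) = (\<Sum>i\<in>I. (a i - mu)^2 + 2 * (mu - m) * (a i - mu) + (mu - m)^2)"
    by (rule sum.cong) (auto simp: power2_eq_square algebra_simps)
  also have "\<dots> = (\<Sum>i\<in>I. (a i - mu)^2) + 2 * (mu - m) * (\<Sum>i\<in>I. (a i - mu)) + card I * (mu - m)^2"
    by (simp add: sum.distrib sum_distrib_left)
  finally show ?thesis using s0 unfolding mu_def by simp
qed

lemma alg1:
  fixes V u :: real and n :: nat
  assumes "n \<ge> 1"
  shows "((V + real n * (- u / (real n + 1))^2) + (real n * u / (real n + 1))^2) / real n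
        = V / real n + u^2/(real n + 1)"
proof -
  have np: "real n > 0" "real n + 1 > 0" using assms by auto
  have "real n * (- u / (real n + 1))^2 + (real n * u / (real n + 1))^2 = real n * u^2 / (real n + 1)"
  proof -
    have a: "(real n * u / (real n + 1))^2 = real n * real n * u^2 / ((real n + 1) * (real n + 1))"
      by (simp add: power_divide power_mult_distrib power2_eq_square)
    have b: "(- u / (real n + 1))^2 = u^2 / ((real n + 1) * (real n + 1))"
      by (simp add: power_divide power2_eq_square)
    have c: "real n * (u^2 / ((real n + 1) * (real n + 1))) + real n * real n * u^2 / ((real n + 1) * (real n + 1))
       = real n * u^2 * (real n + 1) / ((real n + 1) * (real n + 1))"
      by (simp add: add_divide_distrib[symmetric] algebra_simps)
    also have "\<dots> = real n * u^2 / (real n + 1)" using np by simp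
    finally show ?thesis unfolding a b .
  qed
  then have "((V + real n * (- u / (real n + 1))^2) + (real n * u / (real n + 1))^2) = V + real n * u^2 / (real n + 1)"
    by simp
  moreover have "(V + real n * u^2 / (real n + 1)) / real n = V / real n + u^2/(real n + 1)"
    using np by (simp add: add_divide_distrib)
  ultimately show ?thesis by (simp only:)
qed

lemma score_form:
  fixes e :: "nat \<Rightarrow> real^'d"
  assumes n: "n \<ge> 1"
  shows "(z - mu_z n e j z) / sigma_z n e j z =
    (real n * (z - mu_hat n e j) / (real n + 1)) / sqrt ((sigma_hat n e j)^2 + (z - mu_hat n e j)^2/(real n + 1))"
proof -
  define A where "A = (\<Sum>i=1..n. e i $ j)"
  define mu where "mu = mu_hat n e j"
  define m where "m = mu_z n e j z"
  have npos: "real n > 0" using n by simp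
  have muA: "mu = A / real n" unfolding mu_def mu_hat_def A_def by simp
  have mA: "m = (A + z) / (real n + 1)" unfolding m_def mu_z_def A_def by simp
  have nm: "real n * (z - A / real n) = real n * z - A" using npos by (simp add: right_diff_distrib)
  have zm: "z - m = real n * (z - mu) / (real n + 1)"
    unfolding mA muA nm by (simp add: field_simps)
  have mum: "mu - m = - (z - mu) / (real n + 1)"
  proof -
    have "mu - m = (z - m) - (z - mu)" by simp
    also have "\<dots> = - (z - mu) / (real n + 1)" unfolding zm by (simp add: field_simps)
    finally show ?thesis .
  qed
  have sh: "(\<Sum>i=1..n. (e i $ j - m)^2) = (\<Sum>i=1..n. (e i $ j - mu)^2) + real n * (mu - m)^2"
    using sumsq_shift[of "{1..n}" "\<lambda>i. e i $ j" m] n unfolding muA A_def by simp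
  have sig2: "(sigma_hat n e j)^2 = (\<Sum>i=1..n. (e i $ j - mu)^2) / real n"
    unfolding sigma_hat_def mu_def by (simp add: sum_nonneg)
  have "((\<Sum>i=1..n. (e i $ j - m)^2) + (z - m)^2) / real n
        = (sigma_hat n e j)^2 + (z - mu)^2/(real n + 1)"
    unfolding sh sig2 zm mum by (rule alg1[OF n])
  then have "sigma_z n e j z = sqrt ((sigma_hat n e j)^2 + (z - mu)^2/(real n + 1))"
    unfolding sigma_z_def m_def by simp
  then show ?thesis using zm unfolding m_def mu_def by simp
qed

lemma region_coord:
  fixes e :: "nat \<Rightarrow> real^'d"
  assumes n: "n \<ge> 1" and s: "sigma_hat n e j > 0"
    and cq: "ereal ((z - mu_z n e j z) / sigma_z n e j z) \<le> q"
  shows "ereal z \<le> omega n e j q"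
proof -
  have "ereal (mu_hat n e j + (z - mu_hat n e j)) \<le> om n (mu_hat n e j) (sigma_hat n e j) q"
    by (rule om_le[OF n s]) (use cq in \<open>simp only: score_form[OF n]\<close>)
  then show ?thesis unfolding omega_om by simp
qed



lemma qhat_ge:
  fixes t :: "nat \<Rightarrow> ereal" and x :: ereal
  assumes k: "nat \<lceil>(1 - \<alpha>) * real (n + 1)\<rceil> = k" "1 \<le> k" "k \<le> n + 1"
    and c: "card {i\<in>{1..n}. t i < x} < k"
  shows "x \<le> Qhat \<alpha> n t"
proof (rule ccontr)
  assume "\<not> x \<le> Qhat \<alpha> n t"
  then have lt: "Qhat \<alpha> n t < x" by simp
  define xs where "xs = map t [1..<n+1] @ [\<infinity>]"
  define L where "L = sort xs"
  have lenL: "length L = n + 1" unfolding L_def xs_def by simp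
  have srt: "sorted L" unfolding L_def by simp
  have Q: "Qhat \<alpha> n t = L ! (k - 1)" unfolding Qhat_def L_def xs_def using k(1) by simp
  have all: "\<forall>y\<in>set (take k L). y < x"
  proof
    fix y assume "y \<in> set (take k L)"
    then obtain i where i: "i < length (take k L)" "take k L ! i = y" by (metis in_set_conv_nth)
    then have "i < k" "i < length L" by auto
    then have "L ! i \<le> L ! (k - 1)" using srt lenL k by (intro sorted_nth_mono) auto
    then show "y < x" using i lt Q by auto
  qed
  have "k = length (filter (\<lambda>y. y < x) (take k L))"
    using all lenL k by (simp add: filter_True min_def)
  also have "\<dots> \<le> length (filter (\<lambda>y. y < x) L)"
  proof -
    have "filter (\<lambda>y. y < x) L = filter (\<lambda>y. y < x) (take k L) @ filter (\<lambda>y. y < x) (drop k L)"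
      by (metis append_take_drop_id filter_append)
    then show ?thesis by simp
  qed
  also have "\<dots> = length (filter (\<lambda>y. y < x) xs)"
    unfolding L_def by (metis mset_filter mset_sort size_mset)
  also have "\<dots> = length (filter (\<lambda>i. t i < x) [1..<n+1])"
    unfolding xs_def by (simp add: filter_map o_def)
  also have "\<dots> = card {i\<in>{1..n}. t i < x}"
    by (subst distinct_length_filter) (auto intro!: arg_cong[where f=card])
  finally show False using c by simp
qed



lemma count_ge:
  fixes s :: "nat \<Rightarrow> real"
  assumes fin: "finite I" and k: "k \<le> card I"
  shows "k \<le> card {i\<in>I. card {l\<in>I. s l < s i} < k}"
proof (rule ccontr)
  define A where "A = {i\<in>I. card {l\<in>I. s l < s i} < k}"
  assume "\<not> k \<le> card {i\<in>I. card {l\<in>I. s l < s i} < k}"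
  then have cA: "card A < k" unfolding A_def by simp
  have "A \<noteq> I" using cA k by auto
  moreover have AI: "A \<subseteq> I" unfolding A_def by auto
  ultimately have ne: "I - A \<noteq> {}" by auto
  have finB: "finite (s ` (I - A))" using fin by simp
  have "Min (s ` (I - A)) \<in> s ` (I - A)" using Min_in[OF finB] ne by auto
  then obtain i where i: "i \<in> I - A" "s i = Min (s ` (I - A))" by auto
  have "{l\<in>I. s l < s i} \<subseteq> A"
  proof
    fix l assume l: "l \<in> {l\<in>I. s l < s i}"
    show "l \<in> A"
    proof (rule ccontr)
      assume "l \<notin> A"
      then have "s i \<le> s l" using i l finB by (auto intro: Min_le)
      then show False using l by auto
    qed
  qed
  then have "card {l\<in>I. s l < s i} \<le> card A"
    by (intro card_mono) (use fin AI finite_subset in auto)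
  then have "i \<in> A" using cA i unfolding A_def by auto
  then show False using i by auto
qed

definition sc :: "nat \<Rightarrow> (nat \<Rightarrow> real^'d) \<Rightarrow> nat \<Rightarrow> real" where
  "sc n e i = S_oracle n e (e i)"

definition Mf :: "nat \<Rightarrow> (nat \<Rightarrow> real^'d) \<Rightarrow> 'd \<Rightarrow> real" where
  "Mf n e j = (\<Sum>i\<in>{1..n+1}. e i $ j) / real (n + 1)"

definition Sf :: "nat \<Rightarrow> (nat \<Rightarrow> real^'d) \<Rightarrow> 'd \<Rightarrow> real" where
  "Sf n e j = sqrt ((\<Sum>i\<in>{1..n+1}. (e i $ j - Mf n e j)^2) / real n)"

lemma S_oracle_full:
  "S_oracle n e t = Max (range (\<lambda>j. (t $ j - Mf n e j) / Sf n e j))"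
proof -
  have m: "mu_z n e j (e (n+1) $ j) = Mf n e j" for j
    unfolding mu_z_def Mf_def by simp
  have s: "sigma_z n e j (e (n+1) $ j) = Sf n e j" for j
    unfolding sigma_z_def Sf_def m by simp
  show ?thesis unfolding S_oracle_def m s ..
qed

lemma sum_perm: "\<tau> permutes S \<Longrightarrow> (\<Sum>i\<in>S. g (\<tau> i)) = sum g S"
  using sum.permute[of \<tau> S g] by (simp add: o_def)

lemma Mf_perm: assumes "\<tau> permutes {1..n+1}" shows "Mf n (\<lambda>i. e (\<tau> i)) = Mf n e"
proof
  fix j
  have "(\<Sum>i\<in>{1..n+1}. e (\<tau> i) $ j) = (\<Sum>i\<in>{1..n+1}. e i $ j)"
    using sum_perm[OF assms, of "\<lambda>i. e i $ j"] .
  then show "Mf n (\<lambda>i. e (\<tau> i)) j = Mf n e j" unfolding Mf_def by (simp only:)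
qed

lemma Sf_perm: assumes "\<tau> permutes {1..n+1}" shows "Sf n (\<lambda>i. e (\<tau> i)) = Sf n e"
proof
  fix j
  have "(\<Sum>i\<in>{1..n+1}. (e (\<tau> i) $ j - Mf n e j)^2) = (\<Sum>i\<in>{1..n+1}. (e i $ j - Mf n e j)^2)"
    using sum_perm[OF assms, of "\<lambda>i. (e i $ j - Mf n e j)^2"] .
  then show "Sf n (\<lambda>i. e (\<tau> i)) j = Sf n e j" unfolding Sf_def Mf_perm[OF assms] by (simp only:)
qed

lemma S_oracle_perm: "\<tau> permutes {1..n+1} \<Longrightarrow> S_oracle n (\<lambda>i. e (\<tau> i)) = S_oracle n e"
  unfolding S_oracle_full by (intro ext) (simp add: Mf_perm Sf_perm)

lemma sc_perm: "\<tau> permutes {1..n+1} \<Longrightarrow> sc n (\<lambda>i. e (\<tau> i)) i = sc n e (\<tau> i)"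
  unfolding sc_def by (simp add: S_oracle_perm)



lemma S_le_Phi:
  fixes e :: "nat \<Rightarrow> real^'d"
  assumes nn: "\<forall>j. e (n+1) $ j \<ge> 0"
  shows "ereal (S_oracle n e t) \<le> Phi_gwc n e t"
proof -
  define f where "f j = (t $ j - mu_z n e j (e (n+1) $ j)) / sigma_z n e j (e (n+1) $ j)" for j
  have "Max (range f) \<in> range f" by (intro Max_in) auto
  then obtain j0 where "Max (range f) = f j0" by (metis imageE)
  moreover have "S_oracle n e t = Max (range f)" unfolding S_oracle_def f_def by simp
  ultimately have j0: "S_oracle n e t = f j0" by simp
  have "ereal (f j0) \<le> (SUP z\<in>{0::real..}. ereal ((t $ j0 - mu_z n e j0 z) / sigma_z n e j0 z))"
    unfolding f_def using nn by (intro SUP_upper) auto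
  also have "\<dots> \<le> Phi_gwc n e t" unfolding Phi_gwc_def by (intro SUP_upper) auto
  finally show ?thesis using j0 by simp
qed

lemma det:
  fixes e :: "nat \<Rightarrow> real^'d"
  assumes n: "n \<ge> 1"
    and k: "nat \<lceil>(1 - \<alpha>) * real (n + 1)\<rceil> = k" "1 \<le> k" "k \<le> n + 1"
    and sig: "\<forall>j. sigma_hat n e j > 0" and nn: "\<forall>j. e (n+1) $ j \<ge> 0"
    and cnt: "card {i\<in>{1..n+1}. sc n e i < sc n e (n+1)} < k"
  shows "\<forall>j. 0 \<le> e (n+1) $ j \<and> ereal (e (n+1) $ j) \<le> omega n e j (Q_oracle \<alpha> n e)"
    and "\<forall>j. 0 \<le> e (n+1) $ j \<and> ereal (e (n+1) $ j) \<le> omega n e j (Q_gwc \<alpha> n e)"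
proof -
  define s where "s = sc n e (n+1)"
  have cj: "ereal ((e (n+1) $ j - mu_z n e j (e (n+1) $ j)) / sigma_z n e j (e (n+1) $ j)) \<le> ereal s" for j
    unfolding s_def sc_def S_oracle_def by (simp add: Max_ge)
  have sub: "{i\<in>{1..n}. sc n e i < s} \<subseteq> {i\<in>{1..n+1}. sc n e i < sc n e (n+1)}"
    unfolding s_def by auto
  have cn: "card {i\<in>{1..n}. sc n e i < s} < k"
    using card_mono[OF _ sub] cnt by simp
  have "ereal s \<le> Q_oracle \<alpha> n e"
    unfolding Q_oracle_def
    by (rule qhat_ge[OF k]) (use cn in \<open>simp add: sc_def\<close>)
  then show "\<forall>j. 0 \<le> e (n+1) $ j \<and> ereal (e (n+1) $ j) \<le> omega n e j (Q_oracle \<alpha> n e)"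
    using nn sig region_coord[OF n] cj by (meson order_trans)
  have sub2: "{i\<in>{1..n}. Phi_gwc n e (e i) < ereal s} \<subseteq> {i\<in>{1..n}. sc n e i < s}"
  proof safe
    fix i assume "i \<in> {1..n}" "Phi_gwc n e (e i) < ereal s"
    moreover have "ereal (S_oracle n e (e i)) \<le> Phi_gwc n e (e i)" using S_le_Phi[of e n, OF nn] .
    ultimately show "sc n e i < s" unfolding sc_def by (metis ereal_less_eq(3) le_less_trans less_ereal.simps(1))
  qed
  have "card {i\<in>{1..n}. Phi_gwc n e (e i) < ereal s} < k"
    using card_mono[OF _ sub2] cn by simp
  then have "ereal s \<le> Q_gwc \<alpha> n e"
    unfolding Q_gwc_def by (rule qhat_ge[OF k])
  then show "\<forall>j. 0 \<le> e (n+1) $ j \<and> ereal (e (n+1) $ j) \<le> omega n e j (Q_gwc \<alpha> n e)"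
    using nn sig region_coord[OF n] cj by (meson order_trans)
qed



lemma card_as_sum: "finite S \<Longrightarrow> card {l\<in>S. Q l} = (\<Sum>l\<in>S. if Q l then 1 else 0)"
  by (simp add: sum.If_cases Int_def conj_commute)

lemma meas_sc:
  assumes "l \<in> {1..n+1}"
  shows "(\<lambda>e. sc n e l) \<in> borel_measurable (PiM {1..n+1} (\<lambda>_. borel :: (real^'d) measure))"
proof -
  have c: "(\<lambda>e. e i) \<in> borel_measurable (PiM {1..n+1} (\<lambda>_. borel :: (real^'d) measure))" if "i \<in> {1..n+1}" for i
    using measurable_component_singleton[OF that] by simp
  have c2: "(\<lambda>e. e i $ j) \<in> borel_measurable (PiM {1..n+1} (\<lambda>_. borel :: (real^'d) measure))" if "i \<in> {1..n+1}" for i j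
  proof -
    have "(\<lambda>x::real^'d. x $ j) \<in> borel_measurable borel"
      by (intro borel_measurable_continuous_onI linear_continuous_on bounded_linear_vec_nth)
    from measurable_compose[OF c[OF that] this] show ?thesis by simp
  qed
  have m: "(\<lambda>e. Mf n e j) \<in> borel_measurable (PiM {1..n+1} (\<lambda>_. borel :: (real^'d) measure))" for j
    unfolding Mf_def using c2 by measurable
  have s: "(\<lambda>e. Sf n e j) \<in> borel_measurable (PiM {1..n+1} (\<lambda>_. borel :: (real^'d) measure))" for j
    unfolding Sf_def using c2 m by measurable
  show ?thesis unfolding sc_def S_oracle_full
    by (rule borel_measurable_Max) (use c2[OF assms] m s in measurable)
qed

lemma meas_H:
  assumes i: "i \<in> {1..n+1}"
  shows "{e\<in>space (PiM {1..n+1} (\<lambda>_. borel :: (real^'d) measure)). card {l\<in>{1..n+1}. sc n e l < sc n e i} < k}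
    \<in> sets (PiM {1..n+1} (\<lambda>_. borel :: (real^'d) measure))"
proof -
  let ?N = "PiM {1..n+1} (\<lambda>_. borel :: (real^'d) measure)"
  have eq: "real (card {l\<in>{1..n+1}. sc n e l < sc n e i}) = (\<Sum>l\<in>{1..n+1}. if sc n e l < sc n e i then 1 else 0 :: real)" for e
    by (subst card_as_sum) (auto simp: of_nat_sum intro!: sum.cong)
  have f: "(\<lambda>e. (\<Sum>l\<in>{1..n+1}. if sc n e l < sc n e i then 1 else 0 :: real)) \<in> borel_measurable ?N"
  proof (rule borel_measurable_sum)
    fix l assume l: "l \<in> {1..n+1}"
    have "Measurable.pred ?N (\<lambda>e. sc n e l < sc n e i)"
      using meas_sc[OF l] meas_sc[OF i] by measurable
    then show "(\<lambda>e. if sc n e l < sc n e i then 1 else 0 :: real) \<in> borel_measurable ?N"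
      by measurable
  qed
  have "{e\<in>space ?N. card {l\<in>{1..n+1}. sc n e l < sc n e i} < k}
      = {e\<in>space ?N. (\<Sum>l\<in>{1..n+1}. if sc n e l < sc n e i then 1 else 0 :: real) < real k}"
    unfolding eq[symmetric] by simp
  also have "\<dots> \<in> sets ?N" using f by measurable
  finally show ?thesis .
qed



lemma card_perm:
  assumes "\<tau> permutes S" "finite S"
  shows "card {l\<in>S. P (\<tau> l)} = card {l\<in>S. P l}"
  using sum_perm[OF assms(1), of "\<lambda>l. if P l then 1 else (0::nat)"] assms(2)
  by (simp add: card_as_sum)

lemma sc_restrict:
  assumes "l \<in> {1..n+1}"
  shows "sc n (restrict g {1..n+1}) l = sc n g l"
proof -
  have m: "Mf n (restrict g {1..n+1}) = Mf n g" unfolding Mf_def by (intro ext sum.cong) auto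
  have s: "Sf n (restrict g {1..n+1}) = Sf n g" unfolding Sf_def m by (intro ext arg_cong[where f=sqrt] arg_cong2[where f="(/)"] sum.cong) auto
  show ?thesis unfolding sc_def S_oracle_full m s using assms by simp
qed

lemma H_restrict:
  assumes "i \<in> {1..n+1}"
  shows "card {l\<in>{1..n+1}. sc n (restrict g {1..n+1}) l < sc n (restrict g {1..n+1}) i}
       = card {l\<in>{1..n+1}. sc n g l < sc n g i}"
  using assms sc_restrict[of _ n g] by (intro arg_cong[where f=card]) auto

lemma sigma_pos:
  fixes e :: "nat \<Rightarrow> real^'d"
  assumes n: "n \<ge> 2" and d: "e 1 $ j \<noteq> e 2 $ j"
  shows "sigma_hat n e j > 0"
proof (rule ccontr)
  assume "\<not> sigma_hat n e j > 0"
  moreover have "(\<Sum>i=1..n. (e i $ j - mu_hat n e j)^2) \<ge> 0" by (simp add: sum_nonneg)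
  ultimately have "(\<Sum>i=1..n. (e i $ j - mu_hat n e j)^2) = 0" unfolding sigma_hat_def using n
    by (smt (verit) divide_pos_pos of_nat_0_less_iff real_sqrt_gt_zero zero_less_numeral order_less_le_trans)
  then have "\<forall>i\<in>{1..n}. (e i $ j - mu_hat n e j)^2 = 0" by (subst (asm) sum_nonneg_eq_0_iff) auto
  then have "e 1 $ j = mu_hat n e j" "e 2 $ j = mu_hat n e j" using n by auto
  then show False using d by simp
qed



theorem proposition3p5:
  fixes M :: "'w measure" and n :: nat and \<alpha> :: real
    and X :: "nat \<Rightarrow> 'w \<Rightarrow> 'x" and Y :: "nat \<Rightarrow> 'w \<Rightarrow> real^'d"
    and E :: "'x \<Rightarrow> real^'d \<Rightarrow> real^'d"
    and Part :: "'w \<Rightarrow> (real^'d) set set"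
    and Clwc_R :: "'w \<Rightarrow> (real^'d) set \<Rightarrow> (real^'d) set"
  assumes "prob_space M"
    and "n \<ge> 2" and "0 < \<alpha>" and "\<alpha> < 1"
    and "\<And>i. i \<in> {1..n+1} \<Longrightarrow> resid E X Y i \<in> borel_measurable M"
    and "exchangeable M (n+1) (resid E X Y)"
    and "assumption_A M n (resid E X Y)"
    and "AE \<omega> in M. disjoint (Part \<omega>)"
    and "AE \<omega> in M. \<Union>(Part \<omega>) = C_gwc \<alpha> n E X Y \<omega>"
    and "AE \<omega> in M. \<forall>R\<in>Part \<omega>. Clwc_R \<omega> R \<subseteq> R"
    and "AE \<omega> in M. \<forall>R\<in>Part \<omega>. Y (n+1) \<omega> \<in> R \<longrightarrow> C_tilde \<alpha> n E X Y \<omega> \<inter> R \<subseteq> Clwc_R \<omega> R"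
    and "{\<omega>\<in>space M. Y (n+1) \<omega> \<in> \<Union>(Clwc_R \<omega> ` Part \<omega>)} \<in> sets M"
  shows "(AE \<omega> in M. \<Union>(Clwc_R \<omega> ` Part \<omega>) \<subseteq> C_gwc \<alpha> n E X Y \<omega>)
    \<and> measure M {\<omega>\<in>space M. Y (n+1) \<omega> \<in> \<Union>(Clwc_R \<omega> ` Part \<omega>)} \<ge> 1 - \<alpha>
    \<and> (\<forall>Clwc :: 'w \<Rightarrow> (real^'d) set.
         (AE \<omega> in M. \<Union>(Clwc_R \<omega> ` Part \<omega>) \<subseteq> Clwc \<omega> \<and> Clwc \<omega> \<subseteq> C_gwc \<alpha> n E X Y \<omega>)
         \<longrightarrow> {\<omega>\<in>space M. Y (n+1) \<omega> \<in> Clwc \<omega>} \<in> sets M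
         \<longrightarrow> measure M {\<omega>\<in>space M. Y (n+1) \<omega> \<in> Clwc \<omega>} \<ge> 1 - \<alpha>)"
proof -
  interpret P: prob_space M by fact
  define V where "V = resid E X Y"
  define I where "I = {1..n+1::nat}"
  define N where "N = PiM I (\<lambda>_. borel :: (real^'d) measure)"
  define k where "k = nat \<lceil>(1 - \<alpha>) * real (n + 1)\<rceil>"
  define H where "H i e = (card {l\<in>I. sc n e l < sc n e i} < k)" for i and e :: "nat \<Rightarrow> real^'d"
  define A where "A i = {\<omega>\<in>space M. H i (\<lambda>l. V l \<omega>)}" for i
  have n1: "n \<ge> 1" using assms(2) by simp
  have kge: "real k \<ge> (1 - \<alpha>) * real (n + 1)" unfolding k_def by (rule real_nat_ceiling_ge)
  have "(1 - \<alpha>) * real (n + 1) > 0" using assms(4) by simp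
  then have "real k > 0" using kge by linarith
  then have k1: "1 \<le> k" by simp
  have kn: "k \<le> n + 1"
  proof -
    have "(1 - \<alpha>) * real (n + 1) \<le> real (n + 1)" using assms(3) by (simp add: mult_le_cancel_right1)
    then have "\<lceil>(1 - \<alpha>) * real (n + 1)\<rceil> \<le> int (n + 1)" by (metis ceiling_le of_int_of_nat_eq)
    then show ?thesis unfolding k_def using assms(3) by simp
  qed
  have Vm: "V i \<in> borel_measurable M" if "i \<in> I" for i using assms(5) that unfolding V_def I_def by auto
  have fm: "(\<lambda>\<omega>. \<lambda>l\<in>I. V (\<pi> l) \<omega>) \<in> measurable M N" if "\<pi> permutes I" for \<pi>
    unfolding N_def by (rule measurable_restrict) (use Vm permutes_in_image[OF that] in auto)
  have fm0: "(\<lambda>\<omega>. \<lambda>l\<in>I. V l \<omega>) \<in> measurable M N" using fm[OF permutes_id] by simp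
  have Hs: "{e\<in>space N. H i e} \<in> sets N" if "i \<in> I" for i
    unfolding N_def H_def I_def by (rule meas_H) (use that in \<open>simp add: I_def\<close>)
  have HR: "H i (restrict g I) = H i g" if "i \<in> I" for i g
    unfolding H_def I_def using H_restrict[of i n g] that unfolding I_def by (simp only:)
  have spN: "(\<lambda>l\<in>I. g l) \<in> space N" for g :: "nat \<Rightarrow> real^'d" unfolding N_def by (simp add: space_PiM)
  have pre: "(\<lambda>\<omega>. \<lambda>l\<in>I. V (\<pi> l) \<omega>) -` {e\<in>space N. H i e} \<inter> space M = {\<omega>\<in>space M. H i (\<lambda>l. V (\<pi> l) \<omega>)}"
    if "i \<in> I" for i \<pi>
  proof -
    have "H i (\<lambda>l\<in>I. V (\<pi> l) \<omega>) = H i (\<lambda>l. V (\<pi> l) \<omega>)" for \<omega> by (rule HR[OF that])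
    then show ?thesis using spN by blast
  qed
  have Asets: "A i \<in> sets M" if "i \<in> I" for i
  proof -
    have "A i = (\<lambda>\<omega>. \<lambda>l\<in>I. V (id l) \<omega>) -` {e\<in>space N. H i e} \<inter> space M"
      unfolding A_def pre[OF that] by simp
    also have "\<dots> = (\<lambda>\<omega>. \<lambda>l\<in>I. V l \<omega>) -` {e\<in>space N. H i e} \<inter> space M" by simp
    also have "\<dots> \<in> sets M" by (rule measurable_sets[OF fm0 Hs[OF that]])
    finally show ?thesis .
  qed
  have exch: "distr M N (\<lambda>\<omega>. \<lambda>l\<in>I. V (\<pi> l) \<omega>) = distr M N (\<lambda>\<omega>. \<lambda>l\<in>I. V l \<omega>)" if "\<pi> permutes I" for \<pi>
    using assms(6) that unfolding exchangeable_def N_def I_def V_def by auto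
  have Aeq: "measure M (A i) = measure M (A (n+1))" if i: "i \<in> I" for i
  proof -
    define \<tau> where "\<tau> = Transposition.transpose i (n+1)"
    have np: "n + 1 \<in> I" unfolding I_def by simp
    have tp: "\<tau> permutes I" unfolding \<tau>_def using i np by (rule permutes_swap_id)
    have "measure M (A (n+1)) = measure M ((\<lambda>\<omega>. \<lambda>l\<in>I. V l \<omega>) -` {e\<in>space N. H (n+1) e} \<inter> space M)"
      using pre[OF np, of id] unfolding A_def id_def by simp
    also have "\<dots> = measure (distr M N (\<lambda>\<omega>. \<lambda>l\<in>I. V l \<omega>)) {e\<in>space N. H (n+1) e}"
      by (rule measure_distr[OF fm0 Hs[OF np], symmetric])
    also have "\<dots> = measure (distr M N (\<lambda>\<omega>. \<lambda>l\<in>I. V (\<tau> l) \<omega>)) {e\<in>space N. H (n+1) e}"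
      using exch[OF tp] by simp
    also have "\<dots> = measure M ((\<lambda>\<omega>. \<lambda>l\<in>I. V (\<tau> l) \<omega>) -` {e\<in>space N. H (n+1) e} \<inter> space M)"
      by (rule measure_distr[OF fm[OF tp] Hs[OF np]])
    also have "\<dots> = measure M {\<omega>\<in>space M. H (n+1) (\<lambda>l. V (\<tau> l) \<omega>)}"
      by (simp only: pre[OF np])
    also have "\<dots> = measure M (A i)"
    proof -
      have "H (n+1) (\<lambda>l. V (\<tau> l) \<omega>) = H i (\<lambda>l. V l \<omega>)" for \<omega>
      proof -
        have "sc n (\<lambda>l. V (\<tau> l) \<omega>) l = sc n (\<lambda>l. V l \<omega>) (\<tau> l)" for l
          using sc_perm[of \<tau> n "\<lambda>l. V l \<omega>" l] tp unfolding I_def by simp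
        moreover have "\<tau> (n+1) = i" unfolding \<tau>_def by simp
        ultimately show ?thesis unfolding H_def
          using card_perm[OF tp, of "\<lambda>m. sc n (\<lambda>l. V l \<omega>) m < sc n (\<lambda>l. V l \<omega>) i"] unfolding I_def by simp
      qed
      then show ?thesis unfolding A_def by simp
    qed
    finally show ?thesis by simp
  qed
  have finA: "emeasure M (A i) < \<infinity>" for i by (simp add: P.emeasure_eq_measure)
  have sumA: "(\<Sum>i\<in>I. measure M (A i)) = (\<integral>\<omega>. (\<Sum>i\<in>I. indicator (A i) \<omega>) \<partial>M)"
  proof -
    have "(\<integral>\<omega>. (\<Sum>i\<in>I. indicator (A i) \<omega> :: real) \<partial>M) = (\<Sum>i\<in>I. (\<integral>\<omega>. indicator (A i) \<omega> \<partial>M))"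
      by (rule Bochner_Integration.integral_sum) (use integrable_indicator[OF Asets finA, where c = "1::real"] in simp)
    also have "\<dots> = (\<Sum>i\<in>I. measure M (A i))"
      by (intro sum.cong refl) (simp add: Int_absorb2 sets.sets_into_space Asets)
    finally show ?thesis by simp
  qed
  have "real k \<le> (\<integral>\<omega>. (\<Sum>i\<in>I. indicator (A i) \<omega>) \<partial>M)"
  proof (rule P.integral_ge_const)
    show "integrable M (\<lambda>\<omega>. \<Sum>i\<in>I. indicator (A i) \<omega> :: real)"
      using integrable_indicator[OF Asets finA, where c = "1::real"] by (intro Bochner_Integration.integrable_sum) simp
    show "AE \<omega> in M. real k \<le> (\<Sum>i\<in>I. indicator (A i) \<omega>)"
    proof (rule AE_I2)
      fix \<omega> assume w: "\<omega> \<in> space M"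
      have fI: "finite I" unfolding I_def by simp
      have "real (card {i\<in>I. H i (\<lambda>l. V l \<omega>)}) = (\<Sum>i\<in>I. real (if H i (\<lambda>l. V l \<omega>) then 1 else 0::nat))"
        by (simp only: card_as_sum[OF fI] of_nat_sum)
      also have "\<dots> = (\<Sum>i\<in>I. indicator (A i) \<omega> :: real)"
        by (intro sum.cong) (auto simp: A_def w indicator_def)
      finally have "(\<Sum>i\<in>I. indicator (A i) \<omega> :: real) = real (card {i\<in>I. H i (\<lambda>l. V l \<omega>)})" by simp
      moreover have "k \<le> card {i\<in>I. H i (\<lambda>l. V l \<omega>)}"
        unfolding H_def by (rule count_ge) (use kn in \<open>auto simp: I_def\<close>)
      ultimately show "real k \<le> (\<Sum>i\<in>I. indicator (A i) \<omega>)" by simp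
    qed
  qed
  moreover have "(\<Sum>i\<in>I. measure M (A i)) = real (n+1) * measure M (A (n+1))"
  proof -
    have "(\<Sum>i\<in>I. measure M (A i)) = (\<Sum>i\<in>I. measure M (A (n+1)))" by (rule sum.cong[OF refl Aeq])
    then show ?thesis unfolding I_def by simp
  qed
  ultimately have "real k \<le> real (n+1) * measure M (A (n+1))" using sumA by simp
  then have "(1 - \<alpha>) * real (n+1) \<le> measure M (A (n+1)) * real (n+1)"
    using kge mult.commute[of "real (n+1)" "measure M (A (n+1))"] by linarith
  then have probA: "1 - \<alpha> \<le> measure M (A (n+1))"
    by (rule mult_right_le_imp_le) simp
  have AEnn: "AE \<omega> in M. \<forall>j. V (n+1) \<omega> $ j \<ge> 0"
    using assms(7) unfolding assumption_A_def V_def by (subst AE_all_countable) auto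
  have AEsig: "AE \<omega> in M. \<forall>j. sigma_hat n (\<lambda>i. V i \<omega>) j > 0"
  proof (subst AE_all_countable, intro allI)
    fix j
    have "AE \<omega> in M. \<forall>i\<in>{1..n+1}. \<forall>k\<in>{1..n+1}. i \<noteq> k \<longrightarrow> V i \<omega> $ j \<noteq> V k \<omega> $ j"
      using assms(7) unfolding assumption_A_def V_def by auto
    then show "AE \<omega> in M. sigma_hat n (\<lambda>i. V i \<omega>) j > 0"
    proof (rule AE_mp, intro AE_I2 impI)
      fix \<omega> assume "\<forall>i\<in>{1..n+1}. \<forall>k\<in>{1..n+1}. i \<noteq> k \<longrightarrow> V i \<omega> $ j \<noteq> V k \<omega> $ j"
      then have "V 1 \<omega> $ j \<noteq> V 2 \<omega> $ j" using assms(2) by auto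
      then show "sigma_hat n (\<lambda>i. V i \<omega>) j > 0" using sigma_pos[OF assms(2)] by simp
    qed
  qed
  have AEcov: "AE \<omega> in M. \<omega> \<in> A (n+1) \<longrightarrow> Y (n+1) \<omega> \<in> C_tilde \<alpha> n E X Y \<omega> \<and> Y (n+1) \<omega> \<in> C_gwc \<alpha> n E X Y \<omega>"
    using AEnn AEsig
  proof eventually_elim
    case (elim \<omega>)
    show ?case
    proof
      assume "\<omega> \<in> A (n+1)"
      then have c: "card {i\<in>{1..n+1}. sc n (\<lambda>i. V i \<omega>) i < sc n (\<lambda>i. V i \<omega>) (n+1)} < k"
        unfolding A_def H_def I_def by simp
      note d = det[OF n1 k_def[symmetric] k1 kn, of "\<lambda>i. V i \<omega>", OF _ _ c] elim
      show "Y (n+1) \<omega> \<in> C_tilde \<alpha> n E X Y \<omega> \<and> Y (n+1) \<omega> \<in> C_gwc \<alpha> n E X Y \<omega>"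
        using d unfolding C_tilde_def C_gwc_def region_def V_def by (simp add: resid_def)
    qed
  qed
  define U where "U \<omega> = \<Union>(Clwc_R \<omega> ` Part \<omega>)" for \<omega>
  have part1: "AE \<omega> in M. U \<omega> \<subseteq> C_gwc \<alpha> n E X Y \<omega>"
    using assms(9,10) unfolding U_def by eventually_elim blast
  have AEU: "AE \<omega> in M. \<omega> \<in> A (n+1) \<longrightarrow> Y (n+1) \<omega> \<in> U \<omega>"
    using AEcov assms(9,11) unfolding U_def by eventually_elim blast
  have part2: "measure M {\<omega>\<in>space M. Y (n+1) \<omega> \<in> U \<omega>} \<ge> 1 - \<alpha>"
  proof -
    have "measure M (A (n+1)) \<le> measure M {\<omega>\<in>space M. Y (n+1) \<omega> \<in> U \<omega>}"
      by (rule P.finite_measure_mono_AE) (use AEU assms(12) in \<open>auto simp: U_def A_def\<close>)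
    then show ?thesis using probA by simp
  qed
  have part3: "measure M {\<omega>\<in>space M. Y (n+1) \<omega> \<in> Clwc \<omega>} \<ge> 1 - \<alpha>"
    if h1: "AE \<omega> in M. U \<omega> \<subseteq> Clwc \<omega> \<and> Clwc \<omega> \<subseteq> C_gwc \<alpha> n E X Y \<omega>"
      and h2: "{\<omega>\<in>space M. Y (n+1) \<omega> \<in> Clwc \<omega>} \<in> sets M" for Clwc
  proof -
    have "AE \<omega> in M. \<omega> \<in> {\<omega>\<in>space M. Y (n+1) \<omega> \<in> U \<omega>} \<longrightarrow> \<omega> \<in> {\<omega>\<in>space M. Y (n+1) \<omega> \<in> Clwc \<omega>}"
      using h1 by eventually_elim auto
    then have "measure M {\<omega>\<in>space M. Y (n+1) \<omega> \<in> U \<omega>} \<le> measure M {\<omega>\<in>space M. Y (n+1) \<omega> \<in> Clwc \<omega>}"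
      using h2 by (rule P.finite_measure_mono_AE)
    then show ?thesis using part2 by simp
  qed
  show ?thesis using part1 part2 part3 unfolding U_def by blast
qed


end
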